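(* Let $v$ be a pair potential with hard core $r_{\mathrm{hc}}>0$, finite range $R$, finite and bounded from below on $(r_{\mathrm{hc}},\infty)$, let $m\ge2$ be an integer with $R<(m+1)r_{\mathrm{hc}}$, $k=m-1$, and $\beta,p>0$. Then the kernel $K_{\beta,p}$ and the operator $\mathcal K_{\beta,p}$ defined below satisfy: (i) $K_{\beta,p}(x,y)=K_{\beta,p}(\mathsf s(y),\mathsf s(x))$; (ii) $K_{\beta,p}(x,y)>0$ for all $(x,y)\in(r_{\mathrm{hc}},\infty)^{2k}$; (iii) $\mathcal K_{\beta,p}$ is a compact operator in $L^2((r_{\mathrm{hc}},\infty)^k)$ (with respect to Lebesgue measure).
   Context: $v:\mathbb{R}_+\to\mathbb{R}\cup\{\infty\}$ measurable, $v\equiv\infty$ on $[0,r_{\mathrm{hc}}]$, $v\equiv0$ on $[R,\infty)$. For $\mathbf z=(z_1,\dots,z_k)$, $\mathbf z'=(z'_1,\dots,z'_k)$ define $V_p(\mathbf z)=\sum_{1\le i<j\le k+1}v(z_i+\dots+z_{j-1})+p\sum_{i=1}^kz_i$, $W(\mathbf z;\mathbf z')=\sum_{i=1}^k\sum_{j=1}^kv(z_i+\dots+z_k+z'_1+\dots+z'_j)$, $K_{\beta,p}(\mathbf z,\mathbf z')=\exp\bigl(-\beta(\tfrac12V_p(\mathbf z)+W(\mathbf z;\mathbf z')+\tfrac12V_p(\mathbf z'))\bigr)$, $\mathcal K_{\beta,p}f(\mathbf z)=\int_{(r_{\mathrm{hc}},\infty)^k}K_{\beta,p}(\mathbf z,\mathbf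 z')f(\mathbf z')\mathrm d\mathbf z'$, and $\mathsf s(z_1,\dots,z_k)=(z_k,\dots,z_1)$. *)

theory Defs
  imports "HOL-Analysis.Analysis"
begin

text \<open>Configurations z = (z_1,...,z_k) are represented as functions nat => real,
  using indices 0,...,k-1 (z_i of the paper is z (i-1)).\<close>

definition Vp :: "(real \<Rightarrow> ereal) \<Rightarrow> real \<Rightarrow> nat \<Rightarrow> (nat \<Rightarrow> real) \<Rightarrow> ereal" where
  "Vp v p k z = (\<Sum>i\<in>{0..k}. \<Sum>j\<in>{i<..k}. v (\<Sum>l\<in>{i..<j}. z l)) + ereal (p * (\<Sum>i<k. z i))"

definition Wint :: "(real \<Rightarrow> ereal) \<Rightarrow> nat \<Rightarrow> (nat \<Rightarrow> real) \<Rightarrow> (nat \<Rightarrow> real) \<Rightarrow> ereal" where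
  "Wint v k z z' = (\<Sum>i<k. \<Sum>j<k. v ((\<Sum>l\<in>{i..<k}. z l) + (\<Sum>l\<in>{..j}. z' l)))"

definition exp_neg_ereal :: "ereal \<Rightarrow> real" where
  "exp_neg_ereal x = (if x = \<infinity> then 0 else if x = -\<infinity> then 0 else exp (- real_of_ereal x))"

definition Kern :: "(real \<Rightarrow> ereal) \<Rightarrow> real \<Rightarrow> real \<Rightarrow> nat \<Rightarrow> (nat \<Rightarrow> real) \<Rightarrow> (nat \<Rightarrow> real) \<Rightarrow> real" where
  "Kern v \<beta> p k z z' = exp_neg_ereal (ereal \<beta> *
     (ereal (1/2) * Vp v p k z + Wint v k z z' + ereal (1/2) * Vp v p k z'))"

definition srev :: "nat \<Rightarrow> (nat \<Rightarrow> real) \<Rightarrow> (nat \<Rightarrow> real)" where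
  "srev k z = (\<lambda>i. if i < k then z (k - 1 - i) else z i)"

definition Mhc :: "nat \<Rightarrow> real \<Rightarrow> (nat \<Rightarrow> real) measure" where
  "Mhc k r = PiM {..<k} (\<lambda>_. restrict_space lborel {r<..})"

definition Kop :: "(real \<Rightarrow> ereal) \<Rightarrow> real \<Rightarrow> real \<Rightarrow> nat \<Rightarrow> real \<Rightarrow> ((nat \<Rightarrow> real) \<Rightarrow> real) \<Rightarrow> (nat \<Rightarrow> real) \<Rightarrow> real" where
  "Kop v \<beta> p k r f z = (\<integral>z'. Kern v \<beta> p k z z' * f z' \<partial>Mhc k r)"

definition L2 :: "'a measure \<Rightarrow> ('a \<Rightarrow> real) \<Rightarrow> bool" where
  "L2 M f \<longleftrightarrow> f \<in> borel_measurable M \<and> integrable M (\<lambda>x. (f x)^2)"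

definition compact_L2_op :: "'a measure \<Rightarrow> (('a \<Rightarrow> real) \<Rightarrow> ('a \<Rightarrow> real)) \<Rightarrow> bool" where
  "compact_L2_op M T \<longleftrightarrow>
     (\<forall>f. L2 M f \<longrightarrow> L2 M (T f)) \<and>
     (\<forall>f g (a::real). L2 M f \<longrightarrow> L2 M g \<longrightarrow>
        (AE x in M. T (\<lambda>y. f y + a * g y) x = T f x + a * T g x)) \<and>
     (\<forall>F. (\<forall>n. L2 M (F n) \<and> (\<integral>x. (F n x)^2 \<partial>M) \<le> 1) \<longrightarrow>
        (\<exists>(r::nat\<Rightarrow>nat) g. strict_mono r \<and> L2 M g \<and>
           (\<lambda>n. \<integral>x. (T (F (r n)) x - g x)^2 \<partial>M) \<longlonglongrightarrow> 0))"

end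

theory Submission
  imports Defs "HOL-Library.Diagonal_Subsequence"
begin

lemma L2_integrable_sq: "L2 M f \<Longrightarrow> integrable M (\<lambda>x. (f x)^2)"
  by (simp add: L2_def)

lemma L2_meas: "L2 M f \<Longrightarrow> f \<in> borel_measurable M"
  by (simp add: L2_def)

lemma L2_mult_integrable:
  assumes "L2 M f" "L2 M g"
  shows "integrable M (\<lambda>x. f x * g x)"
proof (rule Bochner_Integration.integrable_bound[where f="\<lambda>x. (f x)^2 + (g x)^2"])
  show "integrable M (\<lambda>x. (f x)^2 + (g x)^2)" using assms by (auto simp: L2_def)
  show "(\<lambda>x. f x * g x) \<in> borel_measurable M" using assms by (auto simp: L2_def)
  show "AE x in M. norm (f x * g x) \<le> norm ((f x)^2 + (g x)^2)"
  proof (rule AE_I2)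
    fix x
    have "2 * \<bar>f x\<bar> * \<bar>g x\<bar> \<le> (f x)^2 + (g x)^2"
      using sum_squares_bound[of "\<bar>f x\<bar>" "\<bar>g x\<bar>"] by (simp add: power2_abs)
    moreover have "\<bar>f x\<bar> * \<bar>g x\<bar> \<ge> 0" by simp
    ultimately have "\<bar>f x\<bar> * \<bar>g x\<bar> \<le> (f x)^2 + (g x)^2" by linarith
    moreover have "(f x)^2 + (g x)^2 \<ge> 0" by simp
    ultimately show "norm (f x * g x) \<le> norm ((f x)^2 + (g x)^2)"
      by (simp add: abs_mult)
  qed
qed

lemma L2_add: "L2 M f \<Longrightarrow> L2 M g \<Longrightarrow> L2 M (\<lambda>x. f x + g x)"
proof -
  assume f: "L2 M f" and g: "L2 M g"
  have "integrable M (\<lambda>x. (f x)^2 + 2 * (f x * g x) + (g x)^2)"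
    using f g L2_mult_integrable[OF f g] by (auto simp: L2_def)
  then show ?thesis using f g by (simp add: L2_def power2_sum algebra_simps borel_measurable_add)
qed

lemma L2_cmult: "L2 M f \<Longrightarrow> L2 M (\<lambda>x. c * f x)"
  by (simp add: L2_def power_mult_distrib borel_measurable_times)

lemma L2_lin: "L2 M f \<Longrightarrow> L2 M g \<Longrightarrow> L2 M (\<lambda>x. f x + c * g x)"
  using L2_add L2_cmult by blast

lemma L2_diff: "L2 M f \<Longrightarrow> L2 M g \<Longrightarrow> L2 M (\<lambda>x. f x - g x)"
  using L2_lin[of M f g "-1"] by simp

lemma L2_zero: "L2 M (\<lambda>x. 0)"
  by (simp add: L2_def)

lemma L2_abs: "L2 M f \<Longrightarrow> L2 M (\<lambda>x. \<bar>f x\<bar>)"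
  by (simp add: L2_def borel_measurable_abs)

lemma L2_indicator:
  assumes "A \<in> sets M" "emeasure M A < \<infinity>"
  shows "L2 M (indicator A)"
proof -
  have "A \<inter> space M = A" using assms sets.sets_into_space by blast
  then have "integrable M (indicator A :: _ \<Rightarrow> real)"
    using assms by (simp add: integrable_indicator_iff)
  moreover have "(\<lambda>x. (indicator A x :: real)^2) = indicator A"
    by (auto simp: indicator_def)
  ultimately show ?thesis using assms by (simp add: L2_def)
qed

lemma quad_discr:
  fixes a b c :: real
  assumes "a \<ge> 0" "\<And>t. 0 \<le> a * t^2 + 2 * b * t + c"
  shows "b^2 \<le> a * c"
proof (cases "a = 0")
  case True
  show ?thesis
  proof (rule ccontr)
    assume "\<not> ?thesis"
    then have "b \<noteq> 0" using True by simp
    have "0 \<le> 2 * b * (- (c + 1) / (2 * b)) + c" using assms(2)[of "- (c + 1) / (2 * b)"] True by simp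
    also have "2 * b * (- (c + 1) / (2 * b)) = - (c + 1)" using \<open>b \<noteq> 0\<close> by simp
    finally show False by simp
  qed
next
  case False
  then have a: "a > 0" using assms(1) by simp
  have "0 \<le> a * (-b/a)^2 + 2 * b * (-b/a) + c" by (rule assms(2))
  also have "a * (-b/a)^2 + 2 * b * (-b/a) + c = c - b^2 / a"
    using a by (simp add: power2_eq_square field_simps)
  finally have "b^2 / a \<le> c" by simp
  then show ?thesis using a by (simp add: pos_divide_le_eq mult.commute)
qed

lemma cauchy_schwarz_L2:
  assumes f: "L2 M f" and g: "L2 M g"
  shows "(\<integral>x. f x * g x \<partial>M)^2 \<le> (\<integral>x. (f x)^2 \<partial>M) * (\<integral>x. (g x)^2 \<partial>M)"
proof -
  have "(\<integral>x. f x * g x \<partial>M)^2 \<le> (\<integral>x. (g x)^2 \<partial>M) * (\<integral>x. (f x)^2 \<partial>M)"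
  proof (rule quad_discr)
    show "0 \<le> (\<integral>x. (g x)^2 \<partial>M)" by simp
    fix t
    have i1: "integrable M (\<lambda>x. (f x)^2)" "integrable M (\<lambda>x. (g x)^2)"
      "integrable M (\<lambda>x. f x * g x)"
      using f g L2_mult_integrable[OF f g] by (auto simp: L2_def)
    have "0 \<le> (\<integral>x. (f x + t * g x)^2 \<partial>M)" by simp
    also have "(\<integral>x. (f x + t * g x)^2 \<partial>M) =
      (\<integral>x. t^2 * (g x)^2 + 2 * t * (f x * g x) + (f x)^2 \<partial>M)"
      by (rule Bochner_Integration.integral_cong) (auto simp: power2_eq_square algebra_simps)
    also have "\<dots> = t^2 * (\<integral>x. (g x)^2 \<partial>M) + 2 * t * (\<integral>x. f x * g x \<partial>M) + (\<integral>x. (f x)^2 \<partial>M)"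
      using i1 by simp
    finally show "0 \<le> (\<integral>x. (g x)^2 \<partial>M) * t^2 + 2 * (\<integral>x. f x * g x \<partial>M) * t + (\<integral>x. (f x)^2 \<partial>M)"
      by (simp add: algebra_simps)
  qed
  then show ?thesis by (simp add: mult.commute)
qed

lemma cs_abs_bound:
  assumes f: "L2 M f" and g: "L2 M g"
  shows "\<bar>\<integral>x. f x * g x \<partial>M\<bar> \<le> sqrt (\<integral>x. (f x)^2 \<partial>M) * sqrt (\<integral>x. (g x)^2 \<partial>M)"
proof -
  have "\<bar>\<integral>x. f x * g x \<partial>M\<bar> = sqrt ((\<integral>x. f x * g x \<partial>M)^2)" by simp
  also have "\<dots> \<le> sqrt ((\<integral>x. (f x)^2 \<partial>M) * (\<integral>x. (g x)^2 \<partial>M))"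
    using cauchy_schwarz_L2[OF f g] by (rule real_sqrt_le_mono)
  also have "\<dots> = sqrt (\<integral>x. (f x)^2 \<partial>M) * sqrt (\<integral>x. (g x)^2 \<partial>M)"
    by (simp add: real_sqrt_mult)
  finally show ?thesis .
qed

lemma cs_unit_bound:
  assumes f: "L2 M f" and g: "L2 M g" and f1: "(\<integral>x. (f x)^2 \<partial>M) \<le> 1"
  shows "\<bar>\<integral>x. f x * g x \<partial>M\<bar> \<le> sqrt (\<integral>x. (g x)^2 \<partial>M)"
proof -
  have "sqrt (\<integral>x. (f x)^2 \<partial>M) \<le> 1" using f1 by simp
  then have "sqrt (\<integral>x. (f x)^2 \<partial>M) * sqrt (\<integral>x. (g x)^2 \<partial>M) \<le> sqrt (\<integral>x. (g x)^2 \<partial>M)"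
    by (simp add: mult_left_le_one_le)
  then show ?thesis using cs_abs_bound[OF f g] by linarith
qed

definition conv_w :: "'a measure \<Rightarrow> (nat \<Rightarrow> 'a \<Rightarrow> real) \<Rightarrow> ('a \<Rightarrow> real) \<Rightarrow> bool" where
  "conv_w M F \<psi> \<longleftrightarrow> L2 M \<psi> \<and> convergent (\<lambda>n. \<integral>x. F n x * \<psi> x \<partial>M)"

locale bseq =
  fixes M :: "'a measure" and F :: "nat \<Rightarrow> 'a \<Rightarrow> real"
  assumes FL2: "\<And>n. L2 M (F n)" and Fb: "\<And>n. (\<integral>x. (F n x)^2 \<partial>M) \<le> 1"
begin

lemma diff_bound:
  assumes "L2 M \<psi>" "L2 M \<phi>"
  shows "\<bar>(\<integral>x. F n x * \<psi> x \<partial>M) - (\<integral>x. F n x * \<phi> x \<partial>M)\<bar> \<le> sqrt (\<integral>x. (\<phi> x - \<psi> x)^2 \<partial>M)"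
proof -
  have "(\<integral>x. F n x * \<psi> x \<partial>M) - (\<integral>x. F n x * \<phi> x \<partial>M) = (\<integral>x. F n x * (\<psi> x - \<phi> x) \<partial>M)"
    using L2_mult_integrable[OF FL2 assms(1)] L2_mult_integrable[OF FL2 assms(2)]
    by (simp add: right_diff_distrib)
  also have "\<bar>\<dots>\<bar> \<le> sqrt (\<integral>x. (\<psi> x - \<phi> x)^2 \<partial>M)"
    by (rule cs_unit_bound[OF FL2 L2_diff[OF assms] Fb])
  also have "(\<integral>x. (\<psi> x - \<phi> x)^2 \<partial>M) = (\<integral>x. (\<phi> x - \<psi> x)^2 \<partial>M)"
    by (simp add: power2_commute)
  finally show ?thesis .
qed

lemma conv_w_lin:
  assumes "conv_w M F a" "conv_w M F b"
  shows "conv_w M F (\<lambda>x. a x + c * b x)"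
proof -
  have La: "L2 M a" and Lb: "L2 M b" using assms by (auto simp: conv_w_def)
  have eq: "(\<integral>x. F n x * (a x + c * b x) \<partial>M) = (\<integral>x. F n x * a x \<partial>M) + c * (\<integral>x. F n x * b x \<partial>M)" for n
  proof -
    have "(\<integral>x. F n x * (a x + c * b x) \<partial>M) = (\<integral>x. F n x * a x + c * (F n x * b x) \<partial>M)"
      by (simp add: algebra_simps)
    also have "\<dots> = (\<integral>x. F n x * a x \<partial>M) + (\<integral>x. c * (F n x * b x) \<partial>M)"
      using L2_mult_integrable[OF FL2 La] L2_mult_integrable[OF FL2 Lb] by simp
    finally show ?thesis by simp
  qed
  obtain A B where A: "(\<lambda>n. \<integral>x. F n x * a x \<partial>M) \<longlonglongrightarrow> A"
    and B: "(\<lambda>n. \<integral>x. F n x * b x \<partial>M) \<longlonglongrightarrow> B"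
    using assms unfolding conv_w_def convergent_def by blast
  have "(\<lambda>n. (\<integral>x. F n x * a x \<partial>M) + c * (\<integral>x. F n x * b x \<partial>M)) \<longlonglongrightarrow> A + c * B"
    by (intro tendsto_add tendsto_mult_left A B)
  then have "convergent (\<lambda>n. (\<integral>x. F n x * a x \<partial>M) + c * (\<integral>x. F n x * b x \<partial>M))"
    by (rule convergentI)
  then show ?thesis using L2_lin[OF La Lb] by (simp add: conv_w_def eq)
qed

lemma conv_w_zero: "conv_w M F (\<lambda>x. 0)"
  by (simp add: conv_w_def L2_zero convergent_const)

lemma conv_w_cong:
  assumes "\<And>x. x \<in> space M \<Longrightarrow> \<psi> x = \<phi> x" "conv_w M F \<phi>"
  shows "conv_w M F \<psi>"
proof -
  have L: "L2 M \<phi>" using assms by (simp add: conv_w_def)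
  have "\<psi> \<in> borel_measurable M"
    using measurable_cong[of M \<psi> \<phi>] assms(1) L by (simp add: L2_def)
  moreover have "integrable M (\<lambda>x. (\<psi> x)^2)"
    using Bochner_Integration.integrable_cong[of M M "\<lambda>x. (\<psi> x)^2" "\<lambda>x. (\<phi> x)^2"] assms(1) L
    by (simp add: L2_def)
  ultimately have "L2 M \<psi>" by (simp add: L2_def)
  moreover have "(\<integral>x. F n x * \<psi> x \<partial>M) = (\<integral>x. F n x * \<phi> x \<partial>M)" for n
    using assms by (intro Bochner_Integration.integral_cong) auto
  ultimately show ?thesis using assms by (simp add: conv_w_def)
qed

lemma conv_w_approx:
  assumes L: "L2 M \<psi>" and \<phi>: "\<And>i. conv_w M F (\<phi> i)"
    and lim: "(\<lambda>i. \<integral>x. (\<phi> i x - \<psi> x)^2 \<partial>M) \<longlonglongrightarrow> 0"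
  shows "conv_w M F \<psi>"
proof -
  have "Cauchy (\<lambda>n. \<integral>x. F n x * \<psi> x \<partial>M)"
  proof (rule CauchyI)
    fix e :: real assume e: "0 < e"
    obtain i where i: "\<bar>\<integral>x. (\<phi> i x - \<psi> x)^2 \<partial>M\<bar> < (e/3)^2"
      using LIMSEQ_D[OF lim, of "(e/3)^2"] e by force
    have s: "sqrt (\<integral>x. (\<phi> i x - \<psi> x)^2 \<partial>M) < e/3"
    proof -
      have "sqrt (\<integral>x. (\<phi> i x - \<psi> x)^2 \<partial>M) < sqrt ((e/3)^2)"
        using i by (intro real_sqrt_less_mono) simp
      then show ?thesis using e by simp
    qed
    have Li: "L2 M (\<phi> i)" using \<phi> by (simp add: conv_w_def)
    have "Cauchy (\<lambda>n. \<integral>x. F n x * \<phi> i x \<partial>M)"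
      using \<phi>[of i] by (simp add: conv_w_def Cauchy_convergent_iff)
    then obtain N where N: "\<And>m n. m \<ge> N \<Longrightarrow> n \<ge> N \<Longrightarrow>
        norm ((\<integral>x. F m x * \<phi> i x \<partial>M) - (\<integral>x. F n x * \<phi> i x \<partial>M)) < e/3"
      using CauchyD[of _ "e/3"] e by force
    show "\<exists>N. \<forall>m\<ge>N. \<forall>n\<ge>N. norm ((\<integral>x. F m x * \<psi> x \<partial>M) - (\<integral>x. F n x * \<psi> x \<partial>M)) < e"
    proof (intro exI allI impI)
      fix m n assume "m \<ge> N" "n \<ge> N"
      have 1: "\<bar>(\<integral>x. F m x * \<psi> x \<partial>M) - (\<integral>x. F m x * \<phi> i x \<partial>M)\<bar> < e/3"
        using diff_bound[OF L Li, of m] s by linarith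
      have 2: "\<bar>(\<integral>x. F n x * \<psi> x \<partial>M) - (\<integral>x. F n x * \<phi> i x \<partial>M)\<bar> < e/3"
        using diff_bound[OF L Li, of n] s by linarith
      have 3: "\<bar>(\<integral>x. F m x * \<phi> i x \<partial>M) - (\<integral>x. F n x * \<phi> i x \<partial>M)\<bar> < e/3"
        using N[OF \<open>m \<ge> N\<close> \<open>n \<ge> N\<close>] by simp
      show "norm ((\<integral>x. F m x * \<psi> x \<partial>M) - (\<integral>x. F n x * \<psi> x \<partial>M)) < e"
        unfolding real_norm_def using 1 2 3 by linarith
    qed
  qed
  then show ?thesis using L by (simp add: conv_w_def Cauchy_convergent_iff)
qed

lemma conv_w_sum:
  assumes "finite Y" "\<And>y. y \<in> Y \<Longrightarrow> conv_w M F (t y)"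
  shows "conv_w M F (\<lambda>x. \<Sum>y\<in>Y. t y x)"
  using assms
proof (induction Y rule: finite_induct)
  case empty
  then show ?case using conv_w_zero by simp
next
  case (insert a Y)
  have "conv_w M F (\<lambda>x. t a x + 1 * (\<Sum>y\<in>Y. t y x))"
    using insert by (intro conv_w_lin) auto
  then show ?case using insert by simp
qed


lemma dom_to_zero:
  fixes s :: "nat \<Rightarrow> 'a \<Rightarrow> real"
  assumes "\<And>i. s i \<in> borel_measurable M" "integrable M w"
    "\<And>x i. x \<in> space M \<Longrightarrow> norm (s i x) \<le> w x"
    "\<And>x. x \<in> space M \<Longrightarrow> (\<lambda>i. s i x) \<longlonglongrightarrow> 0"
  shows "(\<lambda>i. \<integral>x. s i x \<partial>M) \<longlonglongrightarrow> 0"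
  using integral_dominated_convergence[of "\<lambda>x. 0" M s w] assms by (auto intro: AE_I2)

lemma extend:
  assumes IG: "Int_stable G" and GP: "G \<subseteq> Pow (space M)"
    and sM: "sets M = sigma_sets (space M) G"
    and EG: "\<And>j. E j \<in> G" and Efin: "\<And>j. emeasure M (E j) < \<infinity>"
    and incE: "incseq E" and Ecov: "(\<Union>j. E j) = space M"
    and bas: "\<And>A j. A \<in> G \<Longrightarrow> conv_w M F (indicator (A \<inter> E j))"
  shows "\<And>\<psi>. L2 M \<psi> \<Longrightarrow> conv_w M F \<psi>"
proof -
  have Esets: "E j \<in> sets M" for j using EG sM by auto
  have Esp: "E j \<subseteq> space M" for j using EG GP by auto
  have step1: "\<forall>j. conv_w M F (indicator (A \<inter> E j))" if A: "A \<in> sigma_sets (space M) G" for A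
    using IG GP A
  proof (induction rule: sigma_sets_induct_disjoint)
    case (basic A)
    then show ?case using bas by blast
  next
    case empty
    show ?case using conv_w_zero by simp
  next
    case (compl A)
    show ?case
    proof
      fix j
      have "conv_w M F (\<lambda>x. indicator (E j \<inter> E j) x + (-1) * indicator (A \<inter> E j) x)"
        using compl bas[OF EG[of j], of j] by (intro conv_w_lin) auto
      then show "conv_w M F (indicator ((space M - A) \<inter> E j))"
        by (rule conv_w_cong[rotated]) (auto simp: indicator_def)
    qed
  next
    case (union A)
    show ?case
    proof
      fix j
      have Asets: "A i \<in> sets M" for i using union(2) sM by auto
      define \<psi> where "\<psi> = (indicator ((\<Union>i. A i) \<inter> E j) :: 'a \<Rightarrow> real)"
      define \<phi> where "\<phi> n = (indicator ((\<Union>i<n. A i) \<inter> E j) :: 'a \<Rightarrow> real)" for n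
      have Uset: "(\<Union>i. A i) \<inter> E j \<in> sets M" using Asets Esets by auto
      have "emeasure M ((\<Union>i. A i) \<inter> E j) \<le> emeasure M (E j)"
        using Esets by (intro emeasure_mono) auto
      then have L: "L2 M \<psi>" unfolding \<psi>_def using Efin[of j] Uset
        by (intro L2_indicator) auto
      have cphi: "conv_w M F (\<phi> n)" for n
      proof (induction n)
        case 0
        show ?case using conv_w_zero by (simp add: \<phi>_def)
      next
        case (Suc n)
        have "conv_w M F (\<lambda>x. \<phi> n x + 1 * indicator (A n \<inter> E j) x)"
          using Suc union(3) by (intro conv_w_lin) auto
        moreover have "\<phi> (Suc n) x = \<phi> n x + 1 * indicator (A n \<inter> E j) x" for x
        proof -
          have "x \<notin> A i" if "x \<in> A n" "i < n" for i
          proof -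
            have "A n \<inter> A i = {}" using union(1) \<open>i < n\<close> by (simp add: disjoint_family_on_def)
            then show ?thesis using that by blast
          qed
          then show ?thesis
            by (auto simp: \<phi>_def indicator_def lessThan_Suc)
        qed
        ultimately show ?case by simp
      qed
      have lim: "(\<lambda>n. \<integral>x. (\<phi> n x - \<psi> x)^2 \<partial>M) \<longlonglongrightarrow> 0"
      proof (rule dom_to_zero[where w="indicator (E j)"])
        show "(\<lambda>x. (\<phi> n x - \<psi> x)^2) \<in> borel_measurable M" for n
        proof -
          have "(\<Union>i<n. A i) \<inter> E j \<in> sets M" using Asets Esets by auto
          then show ?thesis unfolding \<phi>_def \<psi>_def using Uset
            by (intro borel_measurable_power borel_measurable_diff borel_measurable_indicator)
        qed
        show "integrable M (indicator (E j) :: _ \<Rightarrow> real)"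
          using Esets Efin[of j] Esp[of j] by (simp add: integrable_indicator_iff Int_absorb2)
        show "norm ((\<phi> n x - \<psi> x)^2) \<le> indicator (E j) x" for x n
          by (auto simp: \<phi>_def \<psi>_def indicator_def)
        show "(\<lambda>n. (\<phi> n x - \<psi> x)^2) \<longlonglongrightarrow> 0" for x
        proof (cases "x \<in> (\<Union>i. A i)")
          case True
          then obtain i0 where "x \<in> A i0" by auto
          then have "\<forall>n\<ge>Suc i0. (\<phi> n x - \<psi> x)^2 = 0"
            by (auto simp: \<phi>_def \<psi>_def indicator_def)
          then show ?thesis
            by (intro tendsto_eventually) (auto simp: eventually_sequentially)
        next
          case False
          then have "(\<phi> n x - \<psi> x)^2 = 0" for n by (auto simp: \<phi>_def \<psi>_def indicator_def)
          then show ?thesis by simp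
        qed
      qed
      show "conv_w M F (indicator ((\<Union>i. A i) \<inter> E j))"
        using conv_w_approx[OF L cphi lim] by (simp add: \<psi>_def)
    qed
  qed
  have step2: "conv_w M F (indicator A)" if A: "A \<in> sets M" and fin: "emeasure M A < \<infinity>" for A
  proof -
    have LA: "L2 M (indicator A)" using A fin by (rule L2_indicator)
    have Asp: "A \<subseteq> space M" using A sets.sets_into_space by blast
    have cj: "conv_w M F (indicator (A \<inter> E j))" for j
      using step1[of A] A sM by auto
    have lim: "(\<lambda>j. \<integral>x. (indicator (A \<inter> E j) x - indicator A x :: real)^2 \<partial>M) \<longlonglongrightarrow> 0"
    proof (rule dom_to_zero[where w="indicator A"])
      show "(\<lambda>x. (indicator (A \<inter> E j) x - indicator A x :: real)^2) \<in> borel_measurable M" for j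
        using A Esets
        by (intro borel_measurable_power borel_measurable_diff borel_measurable_indicator) auto
      show "integrable M (indicator A :: _ \<Rightarrow> real)"
        using A fin Asp by (simp add: integrable_indicator_iff Int_absorb2)
      show "norm ((indicator (A \<inter> E j) x - indicator A x :: real)^2) \<le> indicator A x" for x j
        by (auto simp: indicator_def)
      fix x assume x: "x \<in> space M"
      then obtain j0 where "x \<in> E j0" using Ecov by auto
      then have "\<forall>j\<ge>j0. x \<in> E j" using incE by (auto simp: incseq_def)
      then have "\<forall>j\<ge>j0. (indicator (A \<inter> E j) x - indicator A x :: real)^2 = 0"
        by (auto simp: indicator_def)
      then show "(\<lambda>j. (indicator (A \<inter> E j) x - indicator A x :: real)^2) \<longlonglongrightarrow> 0"
        by (intro tendsto_eventually) (auto simp: eventually_sequentially)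
    qed
    show ?thesis using conv_w_approx[OF LA cj lim] .
  qed
  have step3: "conv_w M F s" if s: "simple_function M s" and Ls: "L2 M s" for s
  proof -
    have trm: "conv_w M F (\<lambda>x. y * indicator (s -` {y} \<inter> space M) x)" for y
    proof (cases "y = 0")
      case True
      then show ?thesis using conv_w_zero by simp
    next
      case False
      let ?S = "s -` {y} \<inter> space M"
      have Sset: "?S \<in> sets M" using s by (rule simple_functionD(2))
      have "integrable M (indicator ?S :: _ \<Rightarrow> real)"
      proof (rule Bochner_Integration.integrable_bound[where f="\<lambda>x. (s x)^2 / y^2"])
        show "integrable M (\<lambda>x. (s x)^2 / y^2)" using Ls by (simp add: L2_def)
        show "(indicator ?S :: _ \<Rightarrow> real) \<in> borel_measurable M" using Sset by simp
        show "AE x in M. norm (indicator ?S x :: real) \<le> norm ((s x)^2 / y^2)"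
        proof (rule AE_I2)
          fix x assume x: "x \<in> space M"
          show "norm (indicator ?S x :: real) \<le> norm ((s x)^2 / y^2)"
          proof (cases "x \<in> ?S")
            case True
            then have "s x = y" by simp
            then show ?thesis using False True by simp
          next
            case False
            then show ?thesis by simp
          qed
        qed
      qed
      moreover have "?S \<inter> space M = ?S" by blast
      ultimately have "emeasure M ?S < \<infinity>"
        by (simp add: integrable_indicator_iff)
      then have "conv_w M F (indicator ?S)" by (rule step2[OF Sset])
      then have "conv_w M F (\<lambda>x. 0 + y * indicator ?S x)"
        using conv_w_zero by (intro conv_w_lin)
      then show ?thesis by simp
    qed
    have "conv_w M F (\<lambda>x. \<Sum>y\<in>s ` space M. y * indicator (s -` {y} \<inter> space M) x)"
      using simple_functionD(1)[OF s] trm by (intro conv_w_sum) auto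
    then show ?thesis
    proof (rule conv_w_cong[rotated])
      fix x assume "x \<in> space M"
      then have "s x = (\<Sum>y\<in>s ` space M. indicator (s -` {y} \<inter> space M) x *\<^sub>R y)"
        by (rule simple_function_indicator_representation_banach[OF s])
      also have "\<dots> = (\<Sum>y\<in>s ` space M. y * indicator (s -` {y} \<inter> space M) x)"
        by (rule sum.cong) (simp_all only: real_scaleR_def mult.commute)
      finally show "s x = (\<Sum>y\<in>s ` space M. y * indicator (s -` {y} \<inter> space M) x)" .
    qed
  qed
  fix \<psi> assume L: "L2 M \<psi>"
  have m: "\<psi> \<in> borel_measurable M" using L by (simp add: L2_def)
  obtain s where s: "\<And>i. simple_function M (s i)"
    and sl: "\<And>x. x \<in> space M \<Longrightarrow> (\<lambda>i. s i x) \<longlonglongrightarrow> \<psi> x"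
    and sb: "\<And>i x. x \<in> space M \<Longrightarrow> dist (s i x) 0 \<le> 2 * dist (\<psi> x) 0"
    using borel_measurable_implies_sequence_metric[OF m, of 0] by blast
  have sb': "\<bar>s i x\<bar> \<le> 2 * \<bar>\<psi> x\<bar>" if "x \<in> space M" for i x
    using sb[OF that, of i] by simp
  have sm: "s i \<in> borel_measurable M" for i using s by (rule borel_measurable_simple_function)
  have Ls: "L2 M (s i)" for i
  proof -
    have "integrable M (\<lambda>x. (s i x)^2)"
    proof (rule Bochner_Integration.integrable_bound[where f="\<lambda>x. 4 * (\<psi> x)^2"])
      show "integrable M (\<lambda>x. 4 * (\<psi> x)^2)" using L by (simp add: L2_def)
      show "(\<lambda>x. (s i x)^2) \<in> borel_measurable M" using sm by (intro borel_measurable_power)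
      show "AE x in M. norm ((s i x)^2) \<le> norm (4 * (\<psi> x)^2)"
      proof (rule AE_I2)
        fix x assume "x \<in> space M"
        then have "\<bar>s i x\<bar>^2 \<le> (2 * \<bar>\<psi> x\<bar>)^2" using sb' by (intro power_mono) auto
        then show "norm ((s i x)^2) \<le> norm (4 * (\<psi> x)^2)" by (simp add: power_mult_distrib)
      qed
    qed
    then show ?thesis using sm by (simp add: L2_def)
  qed
  have lim: "(\<lambda>i. \<integral>x. (s i x - \<psi> x)^2 \<partial>M) \<longlonglongrightarrow> 0"
  proof (rule dom_to_zero[where w="\<lambda>x. 9 * (\<psi> x)^2"])
    show "(\<lambda>x. (s i x - \<psi> x)^2) \<in> borel_measurable M" for i using sm m by (intro borel_measurable_power borel_measurable_diff)
    show "integrable M (\<lambda>x. 9 * (\<psi> x)^2)" using L by (simp add: L2_def)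
    show "norm ((s i x - \<psi> x)^2) \<le> 9 * (\<psi> x)^2" if "x \<in> space M" for x i
    proof -
      have "\<bar>s i x - \<psi> x\<bar> \<le> 3 * \<bar>\<psi> x\<bar>" using sb'[OF that, of i] by linarith
      then have "\<bar>s i x - \<psi> x\<bar>^2 \<le> (3 * \<bar>\<psi> x\<bar>)^2" by (intro power_mono) auto
      then show ?thesis by (simp add: power_mult_distrib)
    qed
    show "(\<lambda>i. (s i x - \<psi> x)^2) \<longlonglongrightarrow> 0" if "x \<in> space M" for x
      using tendsto_power[OF tendsto_diff[OF sl[OF that] tendsto_const[of "\<psi> x"]], of 2] by simp
  qed
  show "conv_w M F \<psi>" using conv_w_approx[OF L step3[OF s Ls] lim] .
qed

end

lemma weak_subseq:
  fixes M :: "'a measure" and F :: "nat \<Rightarrow> 'a \<Rightarrow> real"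
  assumes FL2: "\<And>n. L2 M (F n)" and Fb: "\<And>n. (\<integral>x. (F n x)^2 \<partial>M) \<le> 1"
    and cG: "countable G" and IG: "Int_stable G" and GP: "G \<subseteq> Pow (space M)"
    and sM: "sets M = sigma_sets (space M) G"
    and EG: "\<And>j. E j \<in> G" and Efin: "\<And>j. emeasure M (E j) < \<infinity>"
    and incE: "incseq E" and Ecov: "(\<Union>j. E j) = space M"
  shows "\<exists>r. strict_mono r \<and> (\<forall>\<psi>. L2 M \<psi> \<longrightarrow> convergent (\<lambda>n. \<integral>x. F (r n) x * \<psi> x \<partial>M))"
proof -
  have Gne: "G \<noteq> {}" using EG by blast
  have GS: "A \<in> sets M" if "A \<in> G" for A using that sM by auto
  define g where "g n = from_nat_into G (fst (prod_decode n)) \<inter> E (snd (prod_decode n))" for n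
  have gset: "g n \<in> sets M" for n
    unfolding g_def using GS[OF from_nat_into[OF Gne]] GS[OF EG] by (intro sets.Int)
  have gfin: "emeasure M (g n) < \<infinity>" for n
  proof -
    have "emeasure M (g n) \<le> emeasure M (E (snd (prod_decode n)))"
      using GS[OF EG] unfolding g_def by (intro emeasure_mono) auto
    then show ?thesis using Efin[of "snd (prod_decode n)"] by (simp add: order_le_less_trans)
  qed
  have Lg: "L2 M (indicator (g n))" for n using gset gfin by (rule L2_indicator)
  define a where "a n m = (\<integral>x. F m x * indicator (g n) x \<partial>M)" for n m
  have abound: "\<bar>a n m\<bar> \<le> sqrt (\<integral>x. (indicator (g n) x :: real)^2 \<partial>M)" for n m
    unfolding a_def by (rule cs_unit_bound[OF FL2 Lg Fb])
  interpret subseqs "\<lambda>n s. convergent (\<lambda>i. a n (s i))"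
  proof
    fix n and s :: "nat \<Rightarrow> nat" assume "strict_mono s"
    have "\<forall>x\<in>range (\<lambda>i. a n (s i)). norm x \<le> sqrt (\<integral>x. (indicator (g n) x :: real)^2 \<partial>M)"
      using abound by (simp add: real_norm_def)
    then have "bounded (range (\<lambda>i. a n (s i)))"
      unfolding bounded_iff by blast
    then obtain l r where "strict_mono r" "((\<lambda>i. a n (s i)) \<circ> r) \<longlonglongrightarrow> l"
      using bounded_imp_convergent_subsequence by blast
    then show "\<exists>r'. strict_mono r' \<and> convergent (\<lambda>i. a n ((s \<circ> r') i))"
      by (auto simp: convergent_def o_def)
  qed
  have conv: "convergent (\<lambda>i. a n (diagseq i))" for n
  proof -
    have "convergent (\<lambda>i. a n ((diagseq \<circ> (+) (Suc n)) i))"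
    proof (rule diagseq_holds)
      fix r s :: "nat \<Rightarrow> nat" and n assume r1: "strict_mono r" and r2: "convergent (\<lambda>i. a n (s i))"
      have "convergent ((\<lambda>i. a n (s i)) \<circ> r)" by (rule convergent_subseq_convergent[OF r2 r1])
      then show "convergent (\<lambda>i. a n ((s \<circ> r) i))" by (simp add: o_def)
    qed
    then have "convergent (\<lambda>i. a n (diagseq (i + Suc n)))" by (simp add: o_def add.commute)
    then show ?thesis using convergent_ignore_initial_segment[of "\<lambda>i. a n (diagseq i)" "Suc n"] by simp
  qed
  interpret B: bseq M "\<lambda>n. F (diagseq n)"
    by unfold_locales (rule FL2, rule Fb)
  have bas: "conv_w M (\<lambda>n. F (diagseq n)) (indicator (A \<inter> E j))" if "A \<in> G" for A j
  proof -
    have "A \<in> range (from_nat_into G)" using that range_from_nat_into[OF Gne cG] by simp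
    then obtain i where i: "A = from_nat_into G i" by blast
    define n where "n = prod_encode (i, j)"
    have "g n = A \<inter> E j" by (simp add: g_def n_def i)
    then show ?thesis using conv[of n] Lg[of n] by (simp add: conv_w_def a_def)
  qed
  have "conv_w M (\<lambda>n. F (diagseq n)) \<psi>" if "L2 M \<psi>" for \<psi>
    using B.extend[OF IG GP sM EG Efin incE Ecov bas that] .
  then have "\<forall>\<psi>. L2 M \<psi> \<longrightarrow> convergent (\<lambda>n. \<integral>x. F (diagseq n) x * \<psi> x \<partial>M)"
    by (simp add: conv_w_def)
  then show ?thesis using subseq_diagseq by blast
qed


lemma dom_to_zero0:
  fixes s :: "nat \<Rightarrow> 'a \<Rightarrow> real"
  assumes "\<And>i. s i \<in> borel_measurable M" "integrable M w"
    "\<And>x i. x \<in> space M \<Longrightarrow> norm (s i x) \<le> w x"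
    "\<And>x. x \<in> space M \<Longrightarrow> (\<lambda>i. s i x) \<longlonglongrightarrow> 0"
  shows "(\<lambda>i. \<integral>x. s i x \<partial>M) \<longlonglongrightarrow> 0"
  using integral_dominated_convergence[of "\<lambda>x. 0" M s w] assms by (auto intro: AE_I2)

lemma HS_compact:
  fixes M :: "'a measure" and K :: "'a \<Rightarrow> 'a \<Rightarrow> real" and e :: "'a \<Rightarrow> real"
  assumes sf: "sigma_finite_measure M"
    and cG: "countable G" and IG: "Int_stable G" and GP: "G \<subseteq> Pow (space M)"
    and sM: "sets M = sigma_sets (space M) G"
    and EG: "\<And>j. E j \<in> G" and Efin: "\<And>j. emeasure M (E j) < \<infinity>"
    and incE: "incseq E" and Ecov: "(\<Union>j. E j) = space M"
    and Km: "(\<lambda>(z, z'). K z z') \<in> borel_measurable (M \<Otimes>\<^sub>M M)"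
    and em: "e \<in> borel_measurable M" and e2: "integrable M (\<lambda>x. (e x)^2)"
    and e0: "\<And>x. x \<in> space M \<Longrightarrow> 0 \<le> e x" and A0: "0 \<le> A"
    and Kb: "\<And>z z'. z \<in> space M \<Longrightarrow> z' \<in> space M \<Longrightarrow> \<bar>K z z'\<bar> \<le> A * e z * e z'"
  shows "(\<forall>f z. L2 M f \<longrightarrow> z \<in> space M \<longrightarrow> integrable M (\<lambda>z'. K z z' * f z'))
     \<and> compact_L2_op M (\<lambda>f z. \<integral>z'. K z z' * f z' \<partial>M)"
proof -
  define T where "T f z = (\<integral>z'. K z z' * f z' \<partial>M)" for f z
  define Ce where "Ce = sqrt (\<integral>x. (e x)^2 \<partial>M)"
  have Ce0: "Ce \<ge> 0" unfolding Ce_def by simp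
  have Le: "L2 M e" using em e2 by (simp add: L2_def)
  have Kzm: "(\<lambda>z'. K z z') \<in> borel_measurable M" if z: "z \<in> space M" for z
    using measurable_Pair2[OF Km z] by simp
  have Kzsq: "(K z z')^2 \<le> (A * e z)^2 * (e z')^2" if "z \<in> space M" "z' \<in> space M" for z z'
  proof -
    have "\<bar>K z z'\<bar>^2 \<le> (A * e z * e z')^2"
      using Kb[OF that] by (intro power_mono) auto
    then show ?thesis by (simp add: power_mult_distrib)
  qed
  have LK: "L2 M (\<lambda>z'. K z z')" if z: "z \<in> space M" for z
  proof -
    have "integrable M (\<lambda>z'. (K z z')^2)"
    proof (rule Bochner_Integration.integrable_bound[where f="\<lambda>z'. (A * e z)^2 * (e z')^2"])
      show "integrable M (\<lambda>z'. (A * e z)^2 * (e z')^2)" using e2 by simp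
      show "(\<lambda>z'. (K z z')^2) \<in> borel_measurable M" using Kzm[OF z] by (rule borel_measurable_power)
      show "AE z' in M. norm ((K z z')^2) \<le> norm ((A * e z)^2 * (e z')^2)"
        using Kzsq[OF z] by (intro AE_I2) simp
    qed
    then show ?thesis using Kzm[OF z] by (simp add: L2_def)
  qed
  have intK: "integrable M (\<lambda>z'. K z z' * f z')" if "L2 M f" "z \<in> space M" for f z
    using L2_mult_integrable[OF LK[OF that(2)] that(1)] .
  have Tm: "T f \<in> borel_measurable M" if f: "L2 M f" for f
  proof -
    have fm: "f \<in> borel_measurable M" using f by (simp add: L2_def)
    have "(\<lambda>p. (\<lambda>(z, z'). K z z') p * f (snd p)) \<in> borel_measurable (M \<Otimes>\<^sub>M M)"
      using Km measurable_compose[OF measurable_snd fm] by (rule borel_measurable_times)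
    then have "case_prod (\<lambda>z z'. K z z' * f z') \<in> borel_measurable (M \<Otimes>\<^sub>M M)"
      by (simp add: case_prod_beta')
    then show ?thesis unfolding T_def
      by (rule sigma_finite_measure.borel_measurable_lebesgue_integral[OF sf])
  qed
  have intKsq: "(\<integral>z'. (K z z')^2 \<partial>M) \<le> (A * e z)^2 * Ce^2" if z: "z \<in> space M" for z
  proof -
    have "(\<integral>z'. (K z z')^2 \<partial>M) \<le> (\<integral>z'. (A * e z)^2 * (e z')^2 \<partial>M)"
      using LK[OF z] e2 Kzsq[OF z] by (intro integral_mono) (auto simp: L2_def)
    also have "\<dots> = (A * e z)^2 * Ce^2" unfolding Ce_def by simp
    finally show ?thesis .
  qed
  have Tb: "\<bar>T f z\<bar> \<le> A * e z * Ce * sqrt (\<integral>x. (f x)^2 \<partial>M)" if f: "L2 M f" and z: "z \<in> space M" for f z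
  proof -
    have "\<bar>T f z\<bar> \<le> sqrt (\<integral>z'. (K z z')^2 \<partial>M) * sqrt (\<integral>x. (f x)^2 \<partial>M)"
      unfolding T_def by (rule cs_abs_bound[OF LK[OF z] f])
    also have "\<dots> \<le> (A * e z * Ce) * sqrt (\<integral>x. (f x)^2 \<partial>M)"
    proof (rule mult_right_mono)
      have "sqrt (\<integral>z'. (K z z')^2 \<partial>M) \<le> sqrt ((A * e z * Ce)^2)"
        using intKsq[OF z] by (intro real_sqrt_le_mono) (simp add: power_mult_distrib)
      also have "\<dots> = A * e z * Ce" using A0 e0[OF z] Ce0 by simp
      finally show "sqrt (\<integral>z'. (K z z')^2 \<partial>M) \<le> A * e z * Ce" .
    qed simp
    finally show ?thesis by simp
  qed
  have LT: "L2 M (T f)" if f: "L2 M f" for f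
  proof -
    define c where "c = A * Ce * sqrt (\<integral>x. (f x)^2 \<partial>M)"
    have "integrable M (\<lambda>z. (T f z)^2)"
    proof (rule Bochner_Integration.integrable_bound[where f="\<lambda>z. c^2 * (e z)^2"])
      show "integrable M (\<lambda>z. c^2 * (e z)^2)" using e2 by simp
      show "(\<lambda>z. (T f z)^2) \<in> borel_measurable M" using Tm[OF f] by (rule borel_measurable_power)
      show "AE z in M. norm ((T f z)^2) \<le> norm (c^2 * (e z)^2)"
      proof (rule AE_I2)
        fix z assume z: "z \<in> space M"
        have "\<bar>T f z\<bar>^2 \<le> (c * e z)^2"
          using Tb[OF f z] by (intro power_mono) (auto simp: c_def mult_ac)
        then show "norm ((T f z)^2) \<le> norm (c^2 * (e z)^2)" by (simp add: power_mult_distrib)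
      qed
    qed
    then show ?thesis using Tm[OF f] by (simp add: L2_def)
  qed
  have lin: "T (\<lambda>y. f y + a * g y) z = T f z + a * T g z"
    if f: "L2 M f" and g: "L2 M g" and z: "z \<in> space M" for f g a z
  proof -
    have "T (\<lambda>y. f y + a * g y) z = (\<integral>z'. K z z' * f z' + a * (K z z' * g z') \<partial>M)"
      unfolding T_def by (simp add: algebra_simps)
    also have "\<dots> = T f z + a * T g z"
      unfolding T_def using intK[OF f z] intK[OF g z] by simp
    finally show ?thesis .
  qed
  have cpt: "\<exists>(r::nat\<Rightarrow>nat) g. strict_mono r \<and> L2 M g \<and>
           (\<lambda>n. \<integral>x. (T (F (r n)) x - g x)^2 \<partial>M) \<longlonglongrightarrow> 0"
    if F: "\<forall>n. L2 M (F n) \<and> (\<integral>x. (F n x)^2 \<partial>M) \<le> 1" for F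
  proof -
    have FL2: "\<And>n. L2 M (F n)" and Fb: "\<And>n. (\<integral>x. (F n x)^2 \<partial>M) \<le> 1" using F by auto
    obtain r where r: "strict_mono r"
      and rc: "\<And>\<psi>. L2 M \<psi> \<Longrightarrow> convergent (\<lambda>n. \<integral>x. F (r n) x * \<psi> x \<partial>M)"
      using weak_subseq[where F=F and M=M, OF FL2 Fb cG IG GP sM EG Efin incE Ecov] by blast
    define g where "g z = lim (\<lambda>n. T (F (r n)) z)" for z
    have Tlim: "(\<lambda>n. T (F (r n)) z) \<longlonglongrightarrow> g z" if z: "z \<in> space M" for z
    proof -
      have "convergent (\<lambda>n. \<integral>x. F (r n) x * K z x \<partial>M)" using rc[OF LK[OF z]] .
      moreover have "(\<lambda>n. \<integral>x. F (r n) x * K z x \<partial>M) = (\<lambda>n. T (F (r n)) z)"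
        unfolding T_def by (simp add: mult.commute)
      ultimately have "convergent (\<lambda>n. T (F (r n)) z)" by simp
      then show ?thesis unfolding g_def by (simp add: convergent_LIMSEQ_iff)
    qed
    have gm: "g \<in> borel_measurable M"
      by (rule borel_measurable_LIMSEQ_real[OF Tlim Tm[OF FL2]])
    have Tb1: "\<bar>T (F (r n)) z\<bar> \<le> A * Ce * e z" if z: "z \<in> space M" for n z
    proof -
      have "sqrt (\<integral>x. (F (r n) x)^2 \<partial>M) \<le> 1" using Fb[of "r n"] by simp
      then have "A * e z * Ce * sqrt (\<integral>x. (F (r n) x)^2 \<partial>M) \<le> A * e z * Ce"
        using A0 e0[OF z] Ce0 by (intro mult_right_le_one_le) auto
      then show ?thesis using Tb[OF FL2 z, of "r n"] by (simp add: mult_ac)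
    qed
    have gb: "\<bar>g z\<bar> \<le> A * Ce * e z" if z: "z \<in> space M" for z
      using LIMSEQ_le_const2[OF tendsto_rabs[OF Tlim[OF z]]] Tb1[OF z] by blast
    have Lg: "L2 M g"
    proof -
      have "integrable M (\<lambda>z. (g z)^2)"
      proof (rule Bochner_Integration.integrable_bound[where f="\<lambda>z. (A * Ce)^2 * (e z)^2"])
        show "integrable M (\<lambda>z. (A * Ce)^2 * (e z)^2)" using e2 by simp
        show "(\<lambda>z. (g z)^2) \<in> borel_measurable M" using gm by (rule borel_measurable_power)
        show "AE z in M. norm ((g z)^2) \<le> norm ((A * Ce)^2 * (e z)^2)"
        proof (rule AE_I2)
          fix z assume z: "z \<in> space M"
          have "\<bar>g z\<bar>^2 \<le> (A * Ce * e z)^2" using gb[OF z] by (intro power_mono) auto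
          then show "norm ((g z)^2) \<le> norm ((A * Ce)^2 * (e z)^2)" by (simp add: power_mult_distrib)
        qed
      qed
      then show ?thesis using gm by (simp add: L2_def)
    qed
    have lim: "(\<lambda>n. \<integral>x. (T (F (r n)) x - g x)^2 \<partial>M) \<longlonglongrightarrow> 0"
    proof (rule dom_to_zero0[where w="\<lambda>z. 4 * (A * Ce)^2 * (e z)^2"])
      show "(\<lambda>x. (T (F (r n)) x - g x)^2) \<in> borel_measurable M" for n
        using Tm[OF FL2] gm by (intro borel_measurable_power borel_measurable_diff)
      show "integrable M (\<lambda>z. 4 * (A * Ce)^2 * (e z)^2)" using e2 by simp
      show "norm ((T (F (r n)) x - g x)^2) \<le> 4 * (A * Ce)^2 * (e x)^2" if x: "x \<in> space M" for x n
      proof -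
        have "\<bar>T (F (r n)) x - g x\<bar> \<le> 2 * (A * Ce * e x)" using Tb1[OF x, of n] gb[OF x] by linarith
        then have "\<bar>T (F (r n)) x - g x\<bar>^2 \<le> (2 * (A * Ce * e x))^2" by (intro power_mono) auto
        then show ?thesis by (simp add: power_mult_distrib)
      qed
      show "(\<lambda>n. (T (F (r n)) x - g x)^2) \<longlonglongrightarrow> 0" if x: "x \<in> space M" for x
        using tendsto_power[OF tendsto_diff[OF Tlim[OF x] tendsto_const[of "g x"]], of 2] by simp
    qed
    show ?thesis using r Lg lim by blast
  qed
  have "compact_L2_op M T"
    unfolding compact_L2_op_def
  proof (intro conjI allI impI)
    show "L2 M (T f)" if "L2 M f" for f using LT[OF that] .
    show "AE x in M. T (\<lambda>y. f y + a * g y) x = T f x + a * T g x" if "L2 M f" "L2 M g" for f g a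
      using lin[OF that] by (intro AE_I2) auto
    show "\<exists>(r::nat\<Rightarrow>nat) g. strict_mono r \<and> L2 M g \<and>
           (\<lambda>n. \<integral>x. (T (F (r n)) x - g x)^2 \<partial>M) \<longlonglongrightarrow> 0"
      if "\<forall>n. L2 M (F n) \<and> (\<integral>x. (F n x)^2 \<partial>M) \<le> 1" for F
      using cpt[OF that] .
  qed
  moreover have "T = (\<lambda>f z. \<integral>z'. K z z' * f z' \<partial>M)" by (simp add: T_def fun_eq_iff)
  ultimately show ?thesis using intK by auto
qed

definition Rq :: "real set set" where
  "Rq = (\<lambda>(a, b). {a<..<b}) ` (\<rat> \<times> \<rat>)"

lemma countable_Rq: "countable Rq"
  unfolding Rq_def by (intro countable_image countable_SIGMA countable_rat)

lemma Rq_open_union: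
  fixes S :: "real set" assumes "open S"
  shows "S = \<Union>{I \<in> Rq. I \<subseteq> S}"
proof
  show "\<Union>{I \<in> Rq. I \<subseteq> S} \<subseteq> S" by blast
  show "S \<subseteq> \<Union>{I \<in> Rq. I \<subseteq> S}"
  proof
    fix x assume "x \<in> S"
    then obtain e where e: "e > 0" "ball x e \<subseteq> S" using assms open_contains_ball by blast
    obtain a where a: "a \<in> \<rat>" "x - e < a" "a < x" using Rats_dense_in_real[of "x - e" x] e by auto
    obtain b where b: "b \<in> \<rat>" "x < b" "b < x + e" using Rats_dense_in_real[of x "x + e"] e by auto
    have "{a<..<b} \<subseteq> ball x e" using a b by (auto simp: ball_def dist_real_def)
    moreover have "{a<..<b} \<in> Rq" using a b unfolding Rq_def by force
    moreover have "x \<in> {a<..<b}" using a b by simp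
    ultimately show "x \<in> \<Union>{I \<in> Rq. I \<subseteq> S}" using e by blast
  qed
qed

lemma borel_Rq: "sets (borel :: real measure) = sigma_sets UNIV Rq"
proof
  show "sigma_sets UNIV Rq \<subseteq> sets borel"
    by (rule borel_sigma_sets_subset) (auto simp: Rq_def)
  interpret S: sigma_algebra UNIV "sigma_sets UNIV Rq"
    by (rule sigma_algebra_sigma_sets) simp
  have "{S. open S} \<subseteq> sigma_sets UNIV Rq"
  proof
    fix S :: "real set" assume "S \<in> {S. open S}"
    then have S: "S = \<Union>{I \<in> Rq. I \<subseteq> S}" using Rq_open_union by blast
    have "\<Union>{I \<in> Rq. I \<subseteq> S} \<in> sigma_sets UNIV Rq"
      by (rule S.countable_Union) (auto intro: countable_subset[OF _ countable_Rq])
    then show "S \<in> sigma_sets UNIV Rq" using S by simp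
  qed
  then show "sets borel \<subseteq> sigma_sets UNIV Rq"
    unfolding sets_borel by (rule sigma_sets_mono)
qed

definition ER :: "real \<Rightarrow> real set set" where
  "ER r = (\<inter>) {r<..} ` Rq"

lemma sets_N: "sets (restrict_space lborel {r<..}) = sigma_sets {r<..} (ER r)"
proof -
  have "sets (restrict_space lborel {r<..}) = (\<inter>) {r<..} ` sets (borel :: real measure)"
    by (simp add: sets_restrict_space)
  also have "\<dots> = (\<inter>) {r<..} ` sigma_sets UNIV Rq" by (simp add: borel_Rq)
  also have "\<dots> = sigma_sets {r<..} (ER r)" unfolding ER_def
    by (rule sigma_sets_Int) (auto simp: borel_Rq[symmetric])
  finally show ?thesis .
qed

lemma countable_ER: "countable (ER r)"
  unfolding ER_def by (intro countable_image countable_Rq)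

lemma ER_Int: "A \<in> ER r \<Longrightarrow> B \<in> ER r \<Longrightarrow> A \<inter> B \<in> ER r"
proof -
  assume "A \<in> ER r" "B \<in> ER r"
  then obtain a b c d where "a \<in> \<rat>" "b \<in> \<rat>" "c \<in> \<rat>" "d \<in> \<rat>"
    and A: "A = {r<..} \<inter> {a<..<b}" and B: "B = {r<..} \<inter> {c<..<d}"
    unfolding ER_def Rq_def by auto
  then have "max a c \<in> \<rat>" "min b d \<in> \<rat>" by (auto simp: max_def min_def)
  moreover have "A \<inter> B = {r<..} \<inter> {max a c<..<min b d}" using A B by auto
  ultimately show ?thesis unfolding ER_def Rq_def by force
qed

definition boxset :: "nat \<Rightarrow> real \<Rightarrow> (nat \<Rightarrow> real set) \<Rightarrow> (nat \<Rightarrow> real) set" where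
  "boxset k r A = {f \<in> PiE {..<k} (\<lambda>_. {r<..}). \<forall>i\<in>{..<k}. f i \<in> A i}"

definition Gk :: "nat \<Rightarrow> real \<Rightarrow> (nat \<Rightarrow> real) set set" where
  "Gk k r = {boxset k r A | A. A \<in> Pi {..<k} (\<lambda>_. ER r)}"

lemma space_Mhc: "space (Mhc k r) = PiE {..<k} (\<lambda>_. {r<..})"
  by (simp add: Mhc_def space_PiM)

lemma sets_Mhc: "sets (Mhc k r) = sigma_sets (space (Mhc k r)) (Gk k r)"
proof -
  have "sets (Mhc k r) = sets (PiM {..<k} (\<lambda>_. sigma {r<..} (ER r)))"
    unfolding Mhc_def
  proof (rule sets_PiM_cong)
    have "ER r \<subseteq> Pow {r<..}" by (auto simp: ER_def)
    then show "sets (restrict_space lborel {r<..}) = sets (sigma {r<..} (ER r))" for i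
      by (simp add: sets_N)
  qed simp
  also have "\<dots> = sets (sigma (PiE {..<k} (\<lambda>_. {r<..}))
      {{f\<in>(PiE {..<k} (\<lambda>_. {r<..})). \<forall>i\<in>j. f i \<in> A i} | A j. j \<in> {{..<k}} \<and> A \<in> Pi j (\<lambda>_. ER r)})"
  proof (rule sets_PiM_sigma)
    show "\<exists>S\<subseteq>ER r. countable S \<and> {r<..} = \<Union>S" for i
    proof (intro exI conjI)
      show "ER r \<subseteq> ER r" "countable (ER r)" by (auto simp: countable_ER)
      show "{r<..} = \<Union>(ER r)"
      proof
        show "\<Union>(ER r) \<subseteq> {r<..}" by (auto simp: ER_def)
        have "open {r<..}" by simp
        then have "{r<..} = \<Union>{I \<in> Rq. I \<subseteq> {r<..}}" by (rule Rq_open_union)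
        also have "\<dots> \<subseteq> \<Union>(ER r)" unfolding ER_def by blast
        finally show "{r<..} \<subseteq> \<Union>(ER r)" .
      qed
    qed
  qed (auto simp: ER_def)
  also have "{{f\<in>(PiE {..<k} (\<lambda>_. {r<..})). \<forall>i\<in>j. f i \<in> A i} | A j. j \<in> {{..<k}} \<and> A \<in> Pi j (\<lambda>_. ER r)} = Gk k r"
    unfolding Gk_def boxset_def by blast
  also have "sets (sigma (PiE {..<k} (\<lambda>_. {r<..})) (Gk k r)) = sigma_sets (PiE {..<k} (\<lambda>_. {r<..})) (Gk k r)"
    by (rule sets_measure_of) (auto simp: Gk_def boxset_def)
  finally show ?thesis by (simp add: space_Mhc)
qed

lemma Gk_countable: "countable (Gk k r)"
proof -
  have "Gk k r = boxset k r ` PiE {..<k} (\<lambda>_. ER r)"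
  proof
    show "boxset k r ` PiE {..<k} (\<lambda>_. ER r) \<subseteq> Gk k r"
      unfolding Gk_def by (auto simp: PiE_def)
    show "Gk k r \<subseteq> boxset k r ` PiE {..<k} (\<lambda>_. ER r)"
    proof
      fix X assume "X \<in> Gk k r"
      then obtain A where A: "A \<in> Pi {..<k} (\<lambda>_. ER r)" "X = boxset k r A" unfolding Gk_def by blast
      have "restrict A {..<k} \<in> PiE {..<k} (\<lambda>_. ER r)" using A by auto
      moreover have "boxset k r (restrict A {..<k}) = X" using A by (auto simp: boxset_def)
      ultimately show "X \<in> boxset k r ` PiE {..<k} (\<lambda>_. ER r)" by blast
    qed
  qed
  then show ?thesis by (simp add: countable_PiE countable_ER)
qed

lemma Gk_Int_stable: "Int_stable (Gk k r)"
proof (rule Int_stableI)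
  fix X Y assume "X \<in> Gk k r" "Y \<in> Gk k r"
  then obtain A B where A: "A \<in> Pi {..<k} (\<lambda>_. ER r)" "X = boxset k r A"
    and B: "B \<in> Pi {..<k} (\<lambda>_. ER r)" "Y = boxset k r B" unfolding Gk_def by blast
  have "(\<lambda>i. A i \<inter> B i) \<in> Pi {..<k} (\<lambda>_. ER r)" using A B ER_Int by blast
  moreover have "X \<inter> Y = boxset k r (\<lambda>i. A i \<inter> B i)" using A B by (auto simp: boxset_def)
  ultimately show "X \<inter> Y \<in> Gk k r" unfolding Gk_def by blast
qed

lemma Gk_Pow: "Gk k r \<subseteq> Pow (space (Mhc k r))"
  by (auto simp: Gk_def boxset_def space_Mhc)

definition Ej :: "nat \<Rightarrow> real \<Rightarrow> nat \<Rightarrow> (nat \<Rightarrow> real) set" where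
  "Ej k r j = boxset k r (\<lambda>_. {r<..} \<inter> {- real j<..<real j})"

lemma Ej_G: "Ej k r j \<in> Gk k r"
proof -
  have "{r<..} \<inter> {- real j<..<real j} \<in> ER r"
    unfolding ER_def Rq_def by (rule imageI, rule image_eqI[where x="(- real j, real j)"]) auto
  then show ?thesis unfolding Ej_def Gk_def by blast
qed

lemma Ej_inc: "incseq (Ej k r)"
proof (rule incseq_SucI)
  fix n
  have "{- real n<..<real n} \<subseteq> {- real (Suc n)<..<real (Suc n)}" by auto
  then show "Ej k r n \<subseteq> Ej k r (Suc n)" unfolding Ej_def boxset_def by blast
qed

lemma Ej_cov: "(\<Union>j. Ej k r j) = space (Mhc k r)"
proof
  show "(\<Union>j. Ej k r j) \<subseteq> space (Mhc k r)" by (auto simp: Ej_def boxset_def space_Mhc)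
  show "space (Mhc k r) \<subseteq> (\<Union>j. Ej k r j)"
  proof
    fix f assume f: "f \<in> space (Mhc k r)"
    obtain j :: nat where j: "(\<Sum>i<k. \<bar>f i\<bar>) < real j" using reals_Archimedean2 by blast
    have fb: "\<bar>f i\<bar> < real j" if "i < k" for i
    proof -
      have "\<bar>f i\<bar> \<le> (\<Sum>i<k. \<bar>f i\<bar>)" using that by (intro member_le_sum) auto
      then show ?thesis using j by simp
    qed
    have fi: "f i \<in> {r<..} \<inter> {- real j<..<real j}" if "i \<in> {..<k}" for i
    proof -
      have "\<bar>f i\<bar> < real j" using that fb by simp
      moreover have "f i \<in> {r<..}" using f that by (auto simp: space_Mhc)
      ultimately show ?thesis by (simp add: abs_less_iff)
    qed
    then have "f \<in> Ej k r j" using f fi unfolding Ej_def boxset_def space_Mhc by blast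
    then show "f \<in> (\<Union>j. Ej k r j)" by blast
  qed
qed

lemma sigma_finite_N: "sigma_finite_measure (restrict_space lborel {r::real<..})"
  by (rule sigma_finite_measure_restrict_space[OF lborel.sigma_finite_measure_axioms])
    (simp add: greaterThan_borel)

interpretation PSF: product_sigma_finite "\<lambda>_::nat. restrict_space lborel {r::real<..}" for r
  by (simp add: product_sigma_finite_def sigma_finite_N)

lemma sigma_finite_Mhc: "sigma_finite_measure (Mhc k r)"
  unfolding Mhc_def by (rule PSF.sigma_finite) simp

lemma Ej_fin: "emeasure (Mhc k r) (Ej k r j) < \<infinity>"
proof -
  define X where "X = {r<..} \<inter> {- real j<..<real j}"
  have eq: "Ej k r j = PiE {..<k} (\<lambda>_. X)"
    unfolding Ej_def boxset_def X_def by blast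
  have s: "X \<in> sets (restrict_space lborel {r<..})"
    unfolding sets_restrict_space X_def by (intro image_eqI[where x="{- real j<..<real j}"]) auto
  have "emeasure (restrict_space lborel {r<..}) X = emeasure lborel X"
    by (rule emeasure_restrict_space) (auto simp: X_def)
  also have "\<dots> \<le> emeasure lborel {- real j<..<real j}" unfolding X_def by (rule emeasure_mono) auto
  also have "\<dots> < \<infinity>" by simp
  finally have fin: "emeasure (restrict_space lborel {r<..}) X \<noteq> \<infinity>"
    by simp
  have "emeasure (Mhc k r) (Ej k r j) =
    (\<Prod>i\<in>{..<k}. emeasure (restrict_space lborel {r<..}) X)"
    unfolding eq Mhc_def by (rule PSF.emeasure_PiM) (auto intro: s)
  also have "\<dots> \<noteq> \<infinity>" using fin by (simp add: power_eq_top_ennreal)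
  finally show ?thesis by (simp add: less_top)
qed

definition VR :: "(real \<Rightarrow> ereal) \<Rightarrow> real \<Rightarrow> nat \<Rightarrow> (nat \<Rightarrow> real) \<Rightarrow> real" where
  "VR v p k z = (\<Sum>i\<in>{0..k}. \<Sum>j\<in>{i<..k}. real_of_ereal (v (\<Sum>l\<in>{i..<j}. z l))) + p * (\<Sum>i<k. z i)"

definition WR :: "(real \<Rightarrow> ereal) \<Rightarrow> nat \<Rightarrow> (nat \<Rightarrow> real) \<Rightarrow> (nat \<Rightarrow> real) \<Rightarrow> real" where
  "WR v k z z' = (\<Sum>i<k. \<Sum>j<k. real_of_ereal (v ((\<Sum>l\<in>{i..<k}. z l) + (\<Sum>l\<in>{..j}. z' l))))"

lemma sum_gt_r:
  fixes z :: "nat \<Rightarrow> real"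
  assumes z: "\<forall>l<k. z l > r" and r: "r > 0" and ij: "i < j" "j \<le> k"
  shows "(\<Sum>l\<in>{i..<j}. z l) > r"
proof -
  have "z i \<le> (\<Sum>l\<in>{i..<j}. z l)"
    using ij z r by (intro member_le_sum) (auto intro: less_imp_le[OF less_trans[OF r]])
  moreover have "z i > r" using z ij by auto
  ultimately show ?thesis by linarith
qed

lemma sum_ge0:
  fixes z :: "nat \<Rightarrow> real"
  assumes z: "\<forall>l<k. z l > r" and r: "r > 0" and "\<forall>l\<in>A. l < k"
  shows "(\<Sum>l\<in>A. z l) \<ge> 0"
proof (rule sum_nonneg)
  fix l assume "l \<in> A"
  then have "z l > r" using assms by auto
  then show "z l \<ge> 0" using r by linarith
qed

context
  fixes v :: "real \<Rightarrow> ereal" and r :: real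
  assumes vfin: "\<And>x. x > r \<Longrightarrow> v x = ereal (real_of_ereal (v x))" and r: "r > 0"
begin

lemma Vp_eq:
  assumes z: "\<forall>l<k. z l > r"
  shows "Vp v p k z = ereal (VR v p k z)"
proof -
  have "(\<Sum>j\<in>{i<..k}. v (\<Sum>l\<in>{i..<j}. z l)) = ereal (\<Sum>j\<in>{i<..k}. real_of_ereal (v (\<Sum>l\<in>{i..<j}. z l)))" for i
  proof -
    have "(\<Sum>j\<in>{i<..k}. v (\<Sum>l\<in>{i..<j}. z l)) = (\<Sum>j\<in>{i<..k}. ereal (real_of_ereal (v (\<Sum>l\<in>{i..<j}. z l))))"
    proof (rule sum.cong)
      fix j assume "j \<in> {i<..k}"
      then show "v (\<Sum>l\<in>{i..<j}. z l) = ereal (real_of_ereal (v (\<Sum>l\<in>{i..<j}. z l)))"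
        using sum_gt_r[OF z r, of i j] vfin by auto
    qed simp
    then show ?thesis by simp
  qed
  then show ?thesis unfolding Vp_def VR_def by simp
qed

lemma Wint_eq:
  assumes z: "\<forall>l<k. z l > r" and z': "\<forall>l<k. z' l > r"
  shows "Wint v k z z' = ereal (WR v k z z')"
proof -
  have arg: "(\<Sum>l\<in>{i..<k}. z l) + (\<Sum>l\<in>{..j}. z' l) > r" if "j < k" for i j
  proof -
    have "(\<Sum>l\<in>{i..<k}. z l) \<ge> 0" using sum_ge0[OF z r] by auto
    moreover have "(\<Sum>l\<in>{0..<Suc j}. z' l) > r" using sum_gt_r[OF z' r, of 0 "Suc j"] that by simp
    moreover have "{..j} = {0..<Suc j}" by auto
    ultimately show ?thesis by simp
  qed
  have "Wint v k z z' = (\<Sum>i<k. \<Sum>j<k. ereal (real_of_ereal (v ((\<Sum>l\<in>{i..<k}. z l) + (\<Sum>l\<in>{..j}. z' l)))))"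
    unfolding Wint_def
    by (intro sum.cong refl) (use arg vfin in auto)
  then show ?thesis unfolding WR_def by simp
qed

lemma Kern_eq:
  assumes z: "\<forall>l<k. z l > r" and z': "\<forall>l<k. z' l > r"
  shows "Kern v \<beta> p k z z' = exp (- (\<beta> * (VR v p k z / 2 + WR v k z z' + VR v p k z' / 2)))"
  unfolding Kern_def Vp_eq[OF z] Vp_eq[OF z'] Wint_eq[OF z z']
  by (simp add: exp_neg_ereal_def)

end

lemma sum_lower:
  fixes f :: "'a \<Rightarrow> real"
  assumes "finite A" "card A \<le> n" "\<And>i. i \<in> A \<Longrightarrow> c \<le> f i" "c \<le> 0"
  shows "real n * c \<le> sum f A"
proof -
  have "real (card A) * c \<le> sum f A" using sum_bounded_below[of A c f] assms by simp
  moreover have "real n * c \<le> real (card A) * c" using assms by (intro mult_right_mono_neg) auto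
  ultimately show ?thesis by linarith
qed

context
  fixes v :: "real \<Rightarrow> ereal" and r C :: real
  assumes vC: "\<And>x. x > r \<Longrightarrow> C \<le> real_of_ereal (v x)" and r: "r > 0" and C0: "C \<le> 0"
begin

lemma VR_lower:
  assumes z: "\<forall>l<k. z l > r"
  shows "real (Suc k) * (real (Suc k) * C) + p * (\<Sum>i<k. z i) \<le> VR v p k z"
proof -
  have "real (Suc k) * (real (Suc k) * C) \<le> (\<Sum>i\<in>{0..k}. \<Sum>j\<in>{i<..k}. real_of_ereal (v (\<Sum>l\<in>{i..<j}. z l)))"
  proof (rule sum_lower)
    show "real (Suc k) * C \<le> (\<Sum>j\<in>{i<..k}. real_of_ereal (v (\<Sum>l\<in>{i..<j}. z l)))" if "i \<in> {0..k}" for i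
    proof (rule sum_lower)
      show "C \<le> real_of_ereal (v (\<Sum>l\<in>{i..<j}. z l))" if "j \<in> {i<..k}" for j
        using that sum_gt_r[OF z r, of i j] vC by auto
    qed (use C0 in auto)
    show "real (Suc k) * C \<le> 0" using C0 by (simp add: mult_nonneg_nonpos)
  qed auto
  then show ?thesis unfolding VR_def by simp
qed

lemma WR_lower:
  assumes z: "\<forall>l<k. z l > r" and z': "\<forall>l<k. z' l > r"
  shows "real k * (real k * C) \<le> WR v k z z'"
  unfolding WR_def
proof (rule sum_lower)
  show "real k * C \<le> (\<Sum>j<k. real_of_ereal (v ((\<Sum>l\<in>{i..<k}. z l) + (\<Sum>l\<in>{..j}. z' l))))" if "i \<in> {..<k}" for i
  proof (rule sum_lower)
    show "C \<le> real_of_ereal (v ((\<Sum>l\<in>{i..<k}. z l) + (\<Sum>l\<in>{..j}. z' l)))" if "j \<in> {..<k}" for j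
    proof -
      have "(\<Sum>l\<in>{i..<k}. z l) \<ge> 0" using sum_ge0[OF z r] by auto
      moreover have "(\<Sum>l\<in>{0..<Suc j}. z' l) > r" using sum_gt_r[OF z' r, of 0 "Suc j"] that by simp
      moreover have "{..j} = {0..<Suc j}" by auto
      ultimately have "(\<Sum>l\<in>{i..<k}. z l) + (\<Sum>l\<in>{..j}. z' l) > r" by simp
      then show ?thesis using vC by blast
    qed
  qed (use C0 in auto)
  show "real k * C \<le> 0" using C0 by (simp add: mult_nonneg_nonpos)
qed auto

end

lemma pair_reindex:
  fixes h :: "nat \<Rightarrow> nat \<Rightarrow> 'b::comm_monoid_add"
  shows "(\<Sum>i\<in>{0..k}. \<Sum>j\<in>{i<..k}. h (k - j) (k - i)) = (\<Sum>i\<in>{0..k}. \<Sum>j\<in>{i<..k}. h i j)"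
proof -
  define S where "S = Sigma {0..k} (\<lambda>i. {i<..k})"
  have fS: "finite S" unfolding S_def by auto
  have "(\<Sum>i\<in>{0..k}. \<Sum>j\<in>{i<..k}. h (k - j) (k - i)) = (\<Sum>(i, j)\<in>S. h (k - j) (k - i))"
    unfolding S_def by (rule sum.Sigma) auto
  also have "\<dots> = (\<Sum>(i, j)\<in>S. h i j)"
  proof (rule sum.reindex_bij_witness[where i="\<lambda>(i, j). (k - j, k - i)" and j="\<lambda>(i, j). (k - j, k - i)"])
    fix a assume "a \<in> S"
    then obtain i j where a: "a = (i, j)" "i < j" "j \<le> k" unfolding S_def by auto
    show "(case (case a of (i, j) \<Rightarrow> (k - j, k - i)) of (i, j) \<Rightarrow> (k - j, k - i)) = a"
      using a by auto
    show "(case a of (i, j) \<Rightarrow> (k - j, k - i)) \<in> S" using a unfolding S_def by auto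
    show "(case (case a of (i, j) \<Rightarrow> (k - j, k - i)) of (i, j) \<Rightarrow> h i j) = (case a of (i, j) \<Rightarrow> h (k - j) (k - i))"
      using a by auto
  next
    fix a assume "a \<in> S"
    then obtain i j where a: "a = (i, j)" "i < j" "j \<le> k" unfolding S_def by auto
    show "(case (case a of (i, j) \<Rightarrow> (k - j, k - i)) of (i, j) \<Rightarrow> (k - j, k - i)) = a"
      using a by auto
    show "(case a of (i, j) \<Rightarrow> (k - j, k - i)) \<in> S" using a unfolding S_def by auto
  qed
  also have "\<dots> = (\<Sum>i\<in>{0..k}. \<Sum>j\<in>{i<..k}. h i j)"
    unfolding S_def by (rule sum.Sigma[symmetric]) auto
  finally show ?thesis .
qed

lemma inner_reindex:
  fixes z :: "nat \<Rightarrow> real"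
  assumes "i \<le> j" "j \<le> k"
  shows "(\<Sum>l\<in>{i..<j}. z (k - 1 - l)) = (\<Sum>l\<in>{k - j..<k - i}. z l)"
proof (rule sum.reindex_bij_witness[where i="\<lambda>l. k - 1 - l" and j="\<lambda>l. k - 1 - l"])
  fix a assume "a \<in> {k - j..<k - i}"
  then show "k - 1 - (k - 1 - a) = a" "k - 1 - a \<in> {i..<j}" using assms by auto
next
  fix a assume "a \<in> {i..<j}"
  then show "k - 1 - (k - 1 - a) = a" "k - 1 - a \<in> {k - j..<k - i}" using assms by auto
qed simp

lemma srev_sum:
  assumes "i \<le> j" "j \<le> k"
  shows "(\<Sum>l\<in>{i..<j}. srev k z l) = (\<Sum>l\<in>{k - j..<k - i}. z l)"
proof -
  have "(\<Sum>l\<in>{i..<j}. srev k z l) = (\<Sum>l\<in>{i..<j}. z (k - 1 - l))"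
    using assms by (intro sum.cong) (auto simp: srev_def)
  also have "\<dots> = (\<Sum>l\<in>{k - j..<k - i}. z l)" using inner_reindex[OF assms] .
  finally show ?thesis .
qed

lemma srev_total: "(\<Sum>i<k. srev k z i) = (\<Sum>i<k. z i)"
proof -
  have "(\<Sum>i<k. srev k z i) = (\<Sum>i<k. z (k - Suc i))"
    by (intro sum.cong) (auto simp: srev_def)
  also have "\<dots> = (\<Sum>i<k. z i)" by (rule sum.nat_diff_reindex)
  finally show ?thesis .
qed

lemma Vp_srev: "Vp v p k (srev k z) = Vp v p k z"
proof -
  have "(\<Sum>i\<in>{0..k}. \<Sum>j\<in>{i<..k}. v (\<Sum>l\<in>{i..<j}. srev k z l))
      = (\<Sum>i\<in>{0..k}. \<Sum>j\<in>{i<..k}. (\<lambda>a b. v (\<Sum>l\<in>{a..<b}. z l)) (k - j) (k - i))"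
    by (intro sum.cong refl) (simp add: srev_sum)
  also have "\<dots> = (\<Sum>i\<in>{0..k}. \<Sum>j\<in>{i<..k}. v (\<Sum>l\<in>{i..<j}. z l))"
    by (rule pair_reindex)
  finally show ?thesis unfolding Vp_def srev_total by simp
qed

lemma srev_sum_suffix:
  assumes "i < k"
  shows "(\<Sum>l\<in>{i..<k}. srev k y l) = (\<Sum>l\<in>{..k - 1 - i}. y l)"
proof -
  have "(\<Sum>l\<in>{i..<k}. srev k y l) = (\<Sum>l\<in>{k - k..<k - i}. y l)"
    using assms by (intro srev_sum) auto
  also have "{k - k..<k - i} = {..k - 1 - i}" using assms by auto
  finally show ?thesis .
qed

lemma srev_sum_prefix:
  assumes "j < k"
  shows "(\<Sum>l\<in>{..j}. srev k x l) = (\<Sum>l\<in>{k - 1 - j..<k}. x l)"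
proof -
  have "{..j} = {0..<Suc j}" by auto
  then have "(\<Sum>l\<in>{..j}. srev k x l) = (\<Sum>l\<in>{k - Suc j..<k - 0}. x l)"
    using assms by (simp only: srev_sum[of 0 "Suc j" k])
  also have "k - Suc j = k - 1 - j" by simp
  finally show ?thesis by simp
qed

lemma Wint_srev: "Wint v k (srev k y) (srev k x) = Wint v k x y"
proof -
  define h where "h a b = v ((\<Sum>l\<in>{a..<k}. x l) + (\<Sum>l\<in>{..b}. y l))" for a b
  have "Wint v k (srev k y) (srev k x) = (\<Sum>i<k. \<Sum>j<k. h (k - Suc j) (k - Suc i))"
    unfolding Wint_def h_def
    by (intro sum.cong refl) (simp add: srev_sum_suffix srev_sum_prefix add.commute)
  also have "\<dots> = (\<Sum>j<k. \<Sum>i<k. h (k - Suc j) (k - Suc i))" by (rule sum.swap)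
  also have "\<dots> = (\<Sum>j<k. \<Sum>i<k. h (k - Suc j) i)"
    by (rule sum.cong[OF refl]) (rule sum.nat_diff_reindex)
  also have "\<dots> = (\<Sum>j<k. \<Sum>i<k. h j i)"
    by (rule sum.nat_diff_reindex[where g="\<lambda>j. \<Sum>i<k. h j i"])
  also have "\<dots> = Wint v k x y" unfolding Wint_def h_def ..
  finally show ?thesis .
qed

lemma Kern_sym: "Kern v \<beta> p k x y = Kern v \<beta> p k (srev k y) (srev k x)"
  unfolding Kern_def Vp_srev Wint_srev by (simp add: ac_simps)

lemma exp_neg_ereal_meas: "exp_neg_ereal \<in> borel_measurable borel"
  unfolding exp_neg_ereal_def[abs_def] by measurable

lemma id_meas_N: "(\<lambda>x::real. x) \<in> borel_measurable (restrict_space lborel {r<..})"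
  by (rule measurable_restrict_space1) simp

lemma comp_meas: "l < k \<Longrightarrow> (\<lambda>z. z l) \<in> borel_measurable (Mhc k r)"
proof -
  assume l: "l < k"
  have "(\<lambda>x. x l) \<in> measurable (PiM {..<k} (\<lambda>_. restrict_space lborel {r<..})) (restrict_space lborel {r<..})"
    using l by (intro measurable_component_singleton) auto
  then show ?thesis unfolding Mhc_def by (rule measurable_compose[OF _ id_meas_N])
qed

lemma sum_meas:
  assumes "\<And>l. l \<in> A \<Longrightarrow> l < k"
  shows "(\<lambda>z. \<Sum>l\<in>A. z l) \<in> borel_measurable (Mhc k r)"
  using assms comp_meas by (intro borel_measurable_sum) auto

lemma Vp_meas:
  assumes v: "v \<in> borel_measurable borel"
  shows "Vp v p k \<in> borel_measurable (Mhc k r)"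
proof -
  have "(\<lambda>z. v (\<Sum>l\<in>{i..<j}. z l)) \<in> borel_measurable (Mhc k r)" if "j \<le> k" for i j
    using measurable_compose[OF sum_meas v, of "{i..<j}" k r] that by auto
  moreover have "(\<lambda>z. ereal (p * (\<Sum>i<k. z i))) \<in> borel_measurable (Mhc k r)"
    using sum_meas[of "{..<k}" k r] by (intro borel_measurable_ereal borel_measurable_times) auto
  ultimately show ?thesis unfolding Vp_def[abs_def]
    by (intro borel_measurable_ereal_add borel_measurable_ereal_sum) auto
qed

lemma Wint_meas:
  assumes v: "v \<in> borel_measurable borel"
  shows "(\<lambda>q. Wint v k (fst q) (snd q)) \<in> borel_measurable (Mhc k r \<Otimes>\<^sub>M Mhc k r)"
proof -
  have "(\<lambda>q. v ((\<Sum>l\<in>{i..<k}. fst q l) + (\<Sum>l\<in>{..j}. snd q l))) \<in> borel_measurable (Mhc k r \<Otimes>\<^sub>M Mhc k r)"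
    if "j < k" for i j
  proof -
    have "(\<lambda>q. (\<Sum>l\<in>{i..<k}. fst q l)) \<in> borel_measurable (Mhc k r \<Otimes>\<^sub>M Mhc k r)"
      using measurable_compose[OF measurable_fst sum_meas[of "{i..<k}" k r]] by auto
    moreover have "(\<lambda>q. (\<Sum>l\<in>{..j}. snd q l)) \<in> borel_measurable (Mhc k r \<Otimes>\<^sub>M Mhc k r)"
      using measurable_compose[OF measurable_snd sum_meas[of "{..j}" k r]] that by auto
    ultimately show ?thesis
      by (intro measurable_compose[OF _ v] borel_measurable_add)
  qed
  then show ?thesis unfolding Wint_def
    by (intro borel_measurable_ereal_sum) auto
qed

lemma Kern_meas:
  assumes v: "v \<in> borel_measurable borel"
  shows "(\<lambda>(z, z'). Kern v \<beta> p k z z') \<in> borel_measurable (Mhc k r \<Otimes>\<^sub>M Mhc k r)"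
proof -
  have a: "(\<lambda>q. Vp v p k (fst q)) \<in> borel_measurable (Mhc k r \<Otimes>\<^sub>M Mhc k r)"
    using measurable_compose[OF measurable_fst Vp_meas[OF v]] .
  have b: "(\<lambda>q. Vp v p k (snd q)) \<in> borel_measurable (Mhc k r \<Otimes>\<^sub>M Mhc k r)"
    using measurable_compose[OF measurable_snd Vp_meas[OF v]] .
  have "(\<lambda>q. ereal \<beta> * (ereal (1/2) * Vp v p k (fst q) + Wint v k (fst q) (snd q)
      + ereal (1/2) * Vp v p k (snd q))) \<in> borel_measurable (Mhc k r \<Otimes>\<^sub>M Mhc k r)"
    using a b Wint_meas[OF v] by (intro borel_measurable_ereal_times borel_measurable_ereal_add) auto
  then have "(\<lambda>q. exp_neg_ereal (ereal \<beta> * (ereal (1/2) * Vp v p k (fst q) + Wint v k (fst q) (snd q)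
      + ereal (1/2) * Vp v p k (snd q)))) \<in> borel_measurable (Mhc k r \<Otimes>\<^sub>M Mhc k r)"
    by (rule measurable_compose[OF _ exp_neg_ereal_meas])
  then show ?thesis unfolding Kern_def by (simp add: case_prod_beta')
qed

lemma N_exp_int:
  fixes c :: real assumes c: "c > 0"
  shows "integrable (restrict_space lborel {r<..}) (\<lambda>x. exp (- c * x))"
proof -
  have "(\<lambda>x. exp (- c * x)) absolutely_integrable_on {r..}"
    by (rule nonnegative_absolutely_integrable_1[OF integrable_on_exp_minus_to_infinity[OF c]]) auto
  then have "integrable lebesgue (\<lambda>x. indicator {r..} x *\<^sub>R exp (- c * x))"
    by (simp add: set_integrable_def)
  then have i1: "integrable lborel (\<lambda>x. indicator {r..} x *\<^sub>R exp (- c * x))"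
    by (subst (asm) integrable_completion) auto
  have "integrable lborel (\<lambda>x. indicator {r<..} x *\<^sub>R exp (- c * x))"
  proof (rule Bochner_Integration.integrable_bound[OF i1])
    show "(\<lambda>x. indicator {r<..} x *\<^sub>R exp (- c * x)) \<in> borel_measurable lborel" by simp
    show "AE x in lborel. norm (indicator {r<..} x *\<^sub>R exp (- c * x)) \<le> norm (indicator {r..} x *\<^sub>R exp (- c * x))"
      by (intro AE_I2) (auto simp: indicator_def)
  qed
  then show ?thesis by (subst integrable_restrict_space) auto
qed

definition ee :: "real \<Rightarrow> nat \<Rightarrow> (nat \<Rightarrow> real) \<Rightarrow> real" where
  "ee c k z = exp (- c * (\<Sum>i<k. z i))"

lemma ee_meas: "ee c k \<in> borel_measurable (Mhc k r)"
proof -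
  have s[measurable]: "(\<lambda>z. \<Sum>i<k. z i) \<in> borel_measurable (Mhc k r)" by (rule sum_meas) auto
  show ?thesis unfolding ee_def[abs_def] by measurable
qed

lemma ee_sq_int:
  assumes c: "c > 0"
  shows "integrable (Mhc k r) (\<lambda>z. (ee c k z)^2)"
proof -
  have eq: "(ee c k z)^2 = (\<Prod>i\<in>{..<k}. exp (- (2 * c) * z i))" for z
  proof -
    have "(ee c k z)^2 = exp (2 * (- c * (\<Sum>i<k. z i)))"
      unfolding ee_def by (simp add: power2_eq_square exp_add[symmetric])
    also have "2 * (- c * (\<Sum>i<k. z i)) = (\<Sum>i<k. - (2 * c) * z i)"
      by (simp add: sum_distrib_left mult.assoc)
    also have "exp \<dots> = (\<Prod>i\<in>{..<k}. exp (- (2 * c) * z i))" by (rule exp_sum) simp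
    finally show ?thesis .
  qed
  have "integrable (Mhc k r) (\<lambda>z. \<Prod>i\<in>{..<k}. exp (- (2 * c) * z i))"
    unfolding Mhc_def
    by (rule PSF.product_integrable_prod[where f="\<lambda>i x. exp (- (2 * c) * x)"]) (use c N_exp_int in auto)
  then show ?thesis by (simp add: eq)
qed

theorem lemma6p1:
  fixes v :: "real \<Rightarrow> ereal" and r_hc R \<beta> p :: real and m k :: nat
  assumes v_meas: "v \<in> borel_measurable borel"
    and v_not_minf: "\<forall>x\<ge>0. v x \<noteq> -\<infinity>"
    and r_pos: "r_hc > 0"
    and hard_core: "\<forall>x\<in>{0..r_hc}. v x = \<infinity>"
    and range: "\<forall>x\<ge>R. v x = 0"
    and fin_below: "\<exists>C::real. \<forall>x>r_hc. v x \<noteq> \<infinity> \<and> ereal C \<le> v x"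
    and m_ge: "m \<ge> 2"
    and R_lt: "R < (real m + 1) * r_hc"
    and k_def: "k = m - 1"
    and beta_pos: "\<beta> > 0"
    and p_pos: "p > 0"
  shows "(\<forall>x y. (\<forall>i<k. x i \<ge> 0 \<and> y i \<ge> 0) \<longrightarrow>
            Kern v \<beta> p k x y = Kern v \<beta> p k (srev k y) (srev k x))
       \<and> (\<forall>x y. (\<forall>i<k. x i > r_hc \<and> y i > r_hc) \<longrightarrow> Kern v \<beta> p k x y > 0)
       \<and> (\<forall>f z. L2 (Mhc k r_hc) f \<longrightarrow> z \<in> space (Mhc k r_hc) \<longrightarrow>
            integrable (Mhc k r_hc) (\<lambda>z'. Kern v \<beta> p k z z' * f z'))
       \<and> compact_L2_op (Mhc k r_hc) (Kop v \<beta> p k r_hc)"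
proof -
  obtain C :: real where C: "\<And>x. x > r_hc \<Longrightarrow> v x \<noteq> \<infinity> \<and> ereal C \<le> v x"
    using fin_below by blast
  define C0 where "C0 = min C 0"
  have vfin: "v x = ereal (real_of_ereal (v x))" if "x > r_hc" for x
  proof -
    have "v x \<noteq> \<infinity>" "v x \<noteq> -\<infinity>" using C[OF that] by auto
    then show ?thesis by (cases "v x") auto
  qed
  have vC: "C0 \<le> real_of_ereal (v x)" if "x > r_hc" for x
  proof -
    have "ereal C \<le> ereal (real_of_ereal (v x))" using C[OF that] vfin[OF that] by simp
    then show ?thesis unfolding C0_def by simp
  qed
  have C00: "C0 \<le> 0" unfolding C0_def by simp
  have part1: "Kern v \<beta> p k x y = Kern v \<beta> p k (srev k y) (srev k x)" for x y
    by (rule Kern_sym)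
  have Keq: "Kern v \<beta> p k z z' = exp (- (\<beta> * (VR v p k z / 2 + WR v k z z' + VR v p k z' / 2)))"
    if "\<forall>l<k. z l > r_hc" "\<forall>l<k. z' l > r_hc" for z z'
    using Kern_eq[where v=v and r=r_hc, OF vfin r_pos that] by blast
  have part2: "Kern v \<beta> p k x y > 0" if "\<forall>i<k. x i > r_hc \<and> y i > r_hc" for x y
    using Keq[of x y] that by simp
  define DV where "DV = real (Suc k) * (real (Suc k) * C0)"
  define DW where "DW = real k * (real k * C0)"
  define A where "A = exp (- (\<beta> * (DV + DW)))"
  define c where "c = \<beta> * p / 2"
  have c0: "c > 0" unfolding c_def using beta_pos p_pos by simp
  have spc: "\<forall>l<k. z l > r_hc" if "z \<in> space (Mhc k r_hc)" for z
    using that by (auto simp: space_Mhc PiE_iff)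
  have Kb: "\<bar>Kern v \<beta> p k z z'\<bar> \<le> A * ee c k z * ee c k z'"
    if z: "z \<in> space (Mhc k r_hc)" and z': "z' \<in> space (Mhc k r_hc)" for z z'
  proof -
    have zz: "\<forall>l<k. z l > r_hc" "\<forall>l<k. z' l > r_hc" using spc z z' by auto
    have V1: "DV + p * (\<Sum>i<k. z i) \<le> VR v p k z"
      unfolding DV_def using VR_lower[where v=v and r=r_hc and C=C0, OF vC r_pos C00 zz(1)] by blast
    have V2: "DV + p * (\<Sum>i<k. z' i) \<le> VR v p k z'"
      unfolding DV_def using VR_lower[where v=v and r=r_hc and C=C0, OF vC r_pos C00 zz(2)] by blast
    have W: "DW \<le> WR v k z z'"
      unfolding DW_def using WR_lower[where v=v and r=r_hc and C=C0, OF vC r_pos C00 zz] by blast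
    have "(DV + DW) + (p/2) * (\<Sum>i<k. z i) + (p/2) * (\<Sum>i<k. z' i)
        \<le> VR v p k z / 2 + WR v k z z' + VR v p k z' / 2"
      using V1 V2 W by (simp add: field_simps)
    then have "\<beta> * ((DV + DW) + (p/2) * (\<Sum>i<k. z i) + (p/2) * (\<Sum>i<k. z' i))
        \<le> \<beta> * (VR v p k z / 2 + WR v k z z' + VR v p k z' / 2)"
      using beta_pos by (intro mult_left_mono) auto
    then have "exp (- (\<beta> * (VR v p k z / 2 + WR v k z z' + VR v p k z' / 2)))
        \<le> exp (- (\<beta> * ((DV + DW) + (p/2) * (\<Sum>i<k. z i) + (p/2) * (\<Sum>i<k. z' i))))"
      by simp
    also have "\<dots> = A * ee c k z * ee c k z'"
      unfolding A_def ee_def c_def by (simp add: exp_add[symmetric] algebra_simps)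
    finally show ?thesis using Keq[OF zz] by simp
  qed
  have HS: "(\<forall>f z. L2 (Mhc k r_hc) f \<longrightarrow> z \<in> space (Mhc k r_hc) \<longrightarrow>
        integrable (Mhc k r_hc) (\<lambda>z'. Kern v \<beta> p k z z' * f z'))
     \<and> compact_L2_op (Mhc k r_hc) (\<lambda>f z. \<integral>z'. Kern v \<beta> p k z z' * f z' \<partial>Mhc k r_hc)"
  proof (rule HS_compact[where G="Gk k r_hc" and E="Ej k r_hc" and e="ee c k" and A=A])
    show "sigma_finite_measure (Mhc k r_hc)" by (rule sigma_finite_Mhc)
    show "countable (Gk k r_hc)" by (rule Gk_countable)
    show "Int_stable (Gk k r_hc)" by (rule Gk_Int_stable)
    show "Gk k r_hc \<subseteq> Pow (space (Mhc k r_hc))" by (rule Gk_Pow)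
    show "sets (Mhc k r_hc) = sigma_sets (space (Mhc k r_hc)) (Gk k r_hc)" by (rule sets_Mhc)
    show "Ej k r_hc j \<in> Gk k r_hc" for j by (rule Ej_G)
    show "emeasure (Mhc k r_hc) (Ej k r_hc j) < \<infinity>" for j by (rule Ej_fin)
    show "incseq (Ej k r_hc)" by (rule Ej_inc)
    show "(\<Union>j. Ej k r_hc j) = space (Mhc k r_hc)" by (rule Ej_cov)
    show "(\<lambda>(z, z'). Kern v \<beta> p k z z') \<in> borel_measurable (Mhc k r_hc \<Otimes>\<^sub>M Mhc k r_hc)"
      by (rule Kern_meas[OF v_meas])
    show "ee c k \<in> borel_measurable (Mhc k r_hc)" by (rule ee_meas)
    show "integrable (Mhc k r_hc) (\<lambda>x. (ee c k x)^2)" by (rule ee_sq_int[OF c0])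
    show "0 \<le> ee c k x" for x by (simp add: ee_def)
    show "0 \<le> A" by (simp add: A_def)
    show "\<bar>Kern v \<beta> p k z z'\<bar> \<le> A * ee c k z * ee c k z'"
      if "z \<in> space (Mhc k r_hc)" "z' \<in> space (Mhc k r_hc)" for z z'
      using Kb[OF that] .
  qed
  have Kop_eq: "Kop v \<beta> p k r_hc = (\<lambda>f z. \<integral>z'. Kern v \<beta> p k z z' * f z' \<partial>Mhc k r_hc)"
    by (intro ext) (simp add: Kop_def)
  show ?thesis using part1 part2 HS Kop_eq by auto
qed

end
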